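(* Fix $K$ and $K_T$ with $0<K_T<K$. Among all partitions $\mathcal{C}$ of $[N]$ into $K$ equally sized clusters, the set of maximizers of $\operatorname{Tr}\big(\operatorname{Cov}_{\mathbf{Z}\sim\mathcal{D}(\mathcal{C})}(\mathbf{Z},\mathbf{e})\big)$ equals the set of minimizers of $\mathcal{H}(\mathcal{C})$, where $\operatorname{Cov}(\mathbf{Z},\mathbf{e})=\mathbb{E}\big[(\mathbf{Z}-\mathbb{E}\mathbf{Z})(\mathbf{e}-\mathbb{E}\mathbf{e})^T\big]$ and $\mathbf{e}=(e_1(\mathbf{Z}),\dots,e_N(\mathbf{Z}))$.
   Context: Setting: $N$ experimental units $[N]$ and $M$ interference units $[M]$, with known weights $w_{is}\ge 0$; assume $\sum_{s} w_{is}>0$ for every $i$ and $\sum_i w_{is}>0$ for every $s$. For $\mathbf{Z}\in\{-1,1\}^N$, dose $d_s=\frac{\sum_{i} w_{is}Z_i}{\sum_{i} w_{is}}$ and exposure $e_i(\mathbf{Z})=\frac{\sum_{s} w_{is}d_s}{\sum_{s} w_{is}}$. Balanced $K$-cluster randomized design $\mathcal{D}(\mathcal{C})$: $K\ge2$ divides $N$, $\mathcal{C}$ is a partition of $[N]$ into $K$ clusters of size $N/K$, $\mathcal{C}(i)$ is the cluster containing $i$; choose $K_T$ clusters uniformly at random, set $Z_i=1$ on them and $Z_i=-1$ elsewhere. $\mathcal{H}(\mathcal{C})=\sum_{i\in[N]}\sum_{j\in[N]\setminus\mathcal{C}(i)}\sum_{s\in[M]}\frac{w_{is}}{\sum_{s'}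 w_{is'}}\frac{w_{js}}{\sum_{k} w_{ks}}$. *)

theory Defs
  imports "HOL-Analysis.Analysis" "HOL-Library.Disjoint_Sets"
begin

text \<open>Experimental units are 0..<N, interference units are 0..<M,
  weights w i s (unit i, interference unit s).\<close>

definition dose :: "nat \<Rightarrow> (nat \<Rightarrow> nat \<Rightarrow> real) \<Rightarrow> (nat \<Rightarrow> real) \<Rightarrow> nat \<Rightarrow> real" where
  "dose N w Z s = (\<Sum>i<N. w i s * Z i) / (\<Sum>i<N. w i s)"

definition exposure :: "nat \<Rightarrow> nat \<Rightarrow> (nat \<Rightarrow> nat \<Rightarrow> real) \<Rightarrow> (nat \<Rightarrow> real) \<Rightarrow> nat \<Rightarrow> real" where
  "exposure N M w Z i = (\<Sum>s<M. w i s * dose N w Z s) / (\<Sum>s<M. w i s)"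

definition balanced_partitions :: "nat \<Rightarrow> nat \<Rightarrow> nat set set set" where
  "balanced_partitions N K = {C. partition_on {..<N} C \<and> card C = K \<and> (\<forall>c\<in>C. card c = N div K)}"

definition cluster_of :: "nat set set \<Rightarrow> nat \<Rightarrow> nat set" where
  "cluster_of C i = (THE c. c \<in> C \<and> i \<in> c)"

text \<open>Outcomes of the design D(C): the set T of K_T treated clusters, chosen uniformly.\<close>
definition treat_choices :: "nat set set \<Rightarrow> nat \<Rightarrow> nat set set set" where
  "treat_choices C KT = {T. T \<subseteq> C \<and> card T = KT}"

definition assignment :: "nat set set \<Rightarrow> nat \<Rightarrow> real" where
  "assignment T i = (if i \<in> \<Union>T then 1 else -1)"

definition design_expect :: "nat set set \<Rightarrow> nat \<Rightarrow> ((nat \<Rightarrow> real) \<Rightarrow> real) \<Rightarrow> real" where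
  "design_expect C KT f =
     (\<Sum>T\<in>treat_choices C KT. f (assignment T)) / real (card (treat_choices C KT))"

definition trace_cov :: "nat \<Rightarrow> nat \<Rightarrow> (nat \<Rightarrow> nat \<Rightarrow> real) \<Rightarrow> nat \<Rightarrow> nat set set \<Rightarrow> real" where
  "trace_cov N M w KT C =
     (\<Sum>i<N. design_expect C KT (\<lambda>Z.
        (Z i - design_expect C KT (\<lambda>Z'. Z' i)) *
        (exposure N M w Z i - design_expect C KT (\<lambda>Z'. exposure N M w Z' i))))"

definition H_crit :: "nat \<Rightarrow> nat \<Rightarrow> (nat \<Rightarrow> nat \<Rightarrow> real) \<Rightarrow> nat set set \<Rightarrow> real" where
  "H_crit N M w C =
     (\<Sum>i<N. \<Sum>j\<in>{..<N} - cluster_of C i. \<Sum>s<M.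
        (w i s / (\<Sum>s'<M. w i s')) * (w j s / (\<Sum>k<N. w k s)))"

end

theory Submission
  imports Defs
begin

lemma count_with:
  assumes "finite A" "c \<in> A" "k \<ge> 1"
  shows "card {T. T \<subseteq> A \<and> card T = k \<and> c \<in> T} = card (A - {c}) choose (k - 1)"
proof -
  have "bij_betw (\<lambda>T. T - {c}) {T. T \<subseteq> A \<and> card T = k \<and> c \<in> T} {U. U \<subseteq> A - {c} \<and> card U = k - 1}"
  proof (rule bij_betw_byWitness[where f'="insert c"])
    show "\<forall>a\<in>{T. T \<subseteq> A \<and> card T = k \<and> c \<in> T}. insert c (a - {c}) = a" by auto
    show "\<forall>a\<in>{U. U \<subseteq> A - {c} \<and> card U = k - 1}. insert c a - {c} = a" by auto
    show "(\<lambda>T. T - {c}) ` {T. T \<subseteq> A \<and> card T = k \<and> c \<in> T} \<subseteq> {U. U \<subseteq> A - {c} \<and> card U = k - 1}"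
    proof
      fix U assume "U \<in> (\<lambda>T. T - {c}) ` {T. T \<subseteq> A \<and> card T = k \<and> c \<in> T}"
      then obtain T where T: "T \<subseteq> A" "card T = k" "c \<in> T" "U = T - {c}" by blast
      have "finite T" using T(1) assms(1) by (rule finite_subset)
      then have "card U = k - 1" using T by simp
      then show "U \<in> {U. U \<subseteq> A - {c} \<and> card U = k - 1}" using T by blast
    qed
    show "insert c ` {U. U \<subseteq> A - {c} \<and> card U = k - 1} \<subseteq> {T. T \<subseteq> A \<and> card T = k \<and> c \<in> T}"
    proof
      fix T assume "T \<in> insert c ` {U. U \<subseteq> A - {c} \<and> card U = k - 1}"
      then obtain U where U: "U \<subseteq> A - {c}" "card U = k - 1" "T = insert c U" by blast
      have "finite U" using U(1) assms(1) finite_subset by blast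
      moreover have "c \<notin> U" using U(1) by blast
      ultimately have "card T = k" using U assms(3) by simp
      then show "T \<in> {T. T \<subseteq> A \<and> card T = k \<and> c \<in> T}" using U assms(2) by blast
    qed
  qed
  then have "card {T. T \<subseteq> A \<and> card T = k \<and> c \<in> T} = card {U. U \<subseteq> A - {c} \<and> card U = k - 1}"
    by (rule bij_betw_same_card)
  also have "\<dots> = card (A - {c}) choose (k - 1)"
    using assms(1) by (intro n_subsets) simp
  finally show ?thesis .
qed

lemma cl_props:
  assumes P: "partition_on {..<N} C" and i: "i < N"
  shows "cluster_of C i \<in> C" "i \<in> cluster_of C i"
proof -
  have ex: "\<exists>!c. c \<in> C \<and> i \<in> c"
  proof -
    obtain c where "c \<in> C" "i \<in> c" using P i unfolding partition_on_def by auto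
    moreover have "\<And>d. d \<in> C \<Longrightarrow> i \<in> d \<Longrightarrow> d = c"
      using P \<open>c \<in> C\<close> \<open>i \<in> c\<close> unfolding partition_on_def disjoint_def by blast
    ultimately show ?thesis by blast
  qed
  from theI'[OF ex] show "cluster_of C i \<in> C" "i \<in> cluster_of C i"
    unfolding cluster_of_def by auto
qed

lemma cl_uniq:
  assumes P: "partition_on {..<N} C" and i: "i < N" and "c \<in> C" "i \<in> c"
  shows "cluster_of C i = c"
  using cl_props[OF P i] assms P unfolding partition_on_def disjoint_def by blast

lemma assign_eq:
  assumes P: "partition_on {..<N} C" and i: "i < N" and T: "T \<subseteq> C"
  shows "assignment T i = 2 * of_bool (cluster_of C i \<in> T) - 1"
proof -
  have "i \<in> \<Union>T \<longleftrightarrow> cluster_of C i \<in> T"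
    using cl_props[OF P i] cl_uniq[OF P i] T by blast
  then show ?thesis unfolding assignment_def by auto
qed

definition Amat :: "nat \<Rightarrow> nat \<Rightarrow> (nat \<Rightarrow> nat \<Rightarrow> real) \<Rightarrow> nat \<Rightarrow> nat \<Rightarrow> real" where
  "Amat N M w i j = (\<Sum>s<M. (w i s / (\<Sum>s'<M. w i s')) * (w j s / (\<Sum>k<N. w k s)))"

lemma exposure_lin: "exposure N M w Z i = (\<Sum>j<N. Amat N M w i j * Z j)"
proof -
  have "exposure N M w Z i = (\<Sum>s<M. \<Sum>j<N. (w i s / (\<Sum>s'<M. w i s')) * (w j s / (\<Sum>k<N. w k s)) * Z j)"
    unfolding exposure_def dose_def
    by (simp add: sum_divide_distrib sum_distrib_left sum_distrib_right mult_ac)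
  also have "\<dots> = (\<Sum>j<N. Amat N M w i j * Z j)"
    unfolding Amat_def by (subst sum.swap) (simp add: sum_distrib_right)
  finally show ?thesis .
qed

lemma row_sum:
  assumes "i < N" "(\<Sum>s<M. w i s) > 0" "\<And>s. s < M \<Longrightarrow> (\<Sum>i<N. w i s) > 0"
  shows "(\<Sum>j<N. Amat N M w i j) = 1"
proof -
  have "(\<Sum>j<N. Amat N M w i j) = (\<Sum>s<M. \<Sum>j<N. (w i s / (\<Sum>s'<M. w i s')) * (w j s / (\<Sum>k<N. w k s)))"
    unfolding Amat_def by (rule sum.swap)
  also have "\<dots> = (\<Sum>s<M. (w i s / (\<Sum>s'<M. w i s')) * ((\<Sum>j<N. w j s) / (\<Sum>k<N. w k s)))"
    by (simp only: sum_distrib_left[symmetric] sum_divide_distrib[symmetric])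
  also have "\<dots> = (\<Sum>s<M. w i s / (\<Sum>s'<M. w i s'))"
  proof (rule sum.cong)
    fix s assume "s \<in> {..<M}"
    then have "(\<Sum>k<N. w k s) \<noteq> 0" using assms(3) by force
    then show "(w i s / (\<Sum>s'<M. w i s')) * ((\<Sum>j<N. w j s) / (\<Sum>k<N. w k s)) = w i s / (\<Sum>s'<M. w i s')"
      by simp
  qed simp
  also have "\<dots> = 1" using assms(2) by (simp flip: sum_divide_distrib)
  finally show ?thesis .
qed

lemma cov_gen:
  fixes S :: "'a set" and n :: real
  assumes "finite S" "n > 0" "real (card (S \<inter> {T. P T})) = a" "real (card (S \<inter> {T. Q T})) = a"
    "real (card (S \<inter> {T. P T \<and> Q T})) = b" "\<mu> = 2 * a / n - 1"
  shows "(\<Sum>T\<in>S. (2 * of_bool (P T) - 1 - \<mu>) * (2 * of_bool (Q T) - 1 - \<mu>)) / n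
     = 4 * (b / n - (a/n)^2) + 4 * (a/n)^2 * (real (card S) / n - 1)"
proof -
  define p where "p = a / n"
  have "\<And>T. (2 * of_bool (P T) - 1 - \<mu>) * (2 * of_bool (Q T) - 1 - \<mu>) =
     4 * of_bool (P T \<and> Q T) - 4 * p * of_bool (P T) - 4 * p * of_bool (Q T) + 4 * p^2"
    using assms(6) by (auto simp: p_def power2_eq_square algebra_simps)
  then have "(\<Sum>T\<in>S. (2 * of_bool (P T) - 1 - \<mu>) * (2 * of_bool (Q T) - 1 - \<mu>))
     = 4 * b - 4 * p * a - 4 * p * a + 4 * p^2 * card S"
    using assms(1-5) by (simp add: sum.distrib sum_subtractf flip: sum_distrib_left)
  moreover have "(4 * b - 4 * p * a - 4 * p * a + 4 * p^2 * card S) / n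
     = 4 * (b / n - (a/n)^2) + 4 * (a/n)^2 * (real (card S) / n - 1)"
    using assms(2) by (simp add: p_def field_simps power2_eq_square)
  ultimately show ?thesis by simp
qed


definition n0 :: "nat \<Rightarrow> nat \<Rightarrow> real" where "n0 K KT = real (K choose KT)"
definition c1 :: "nat \<Rightarrow> nat \<Rightarrow> real" where "c1 K KT = real ((K - 1) choose (KT - 1))"
definition c12 :: "nat \<Rightarrow> nat \<Rightarrow> real" where "c12 K KT = c1 K KT - real ((K - 2) choose (KT - 1))"
definition alphaK where "alphaK K KT = 4 * (c1 K KT / n0 K KT - (c1 K KT / n0 K KT)^2)"
definition betaK where "betaK K KT = 4 * (c12 K KT / n0 K KT - (c1 K KT / n0 K KT)^2)"

lemma alpha_gt_beta:
  assumes "0 < KT" "KT < K"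
  shows "betaK K KT < alphaK K KT"
proof -
  have "n0 K KT > 0" unfolding n0_def using assms by simp
  moreover have "real ((K - 2) choose (KT - 1)) > 0" using assms by simp
  ultimately show ?thesis unfolding alphaK_def betaK_def c12_def by (simp add: divide_strict_right_mono)
qed

lemma trace_formula:
  assumes "K \<ge> 2" "0 < KT" "KT < K"
    and W: "\<And>i. i < N \<Longrightarrow> (\<Sum>s<M. w i s) > 0"
    and V: "\<And>s. s < M \<Longrightarrow> (\<Sum>i<N. w i s) > 0"
    and C: "C \<in> balanced_partitions N K"
  shows "trace_cov N M w KT C = alphaK K KT * real N - (alphaK K KT - betaK K KT) * H_crit N M w C"
proof -
  have P: "partition_on {..<N} C" and cardC: "card C = K" using C unfolding balanced_partitions_def by auto
  have finC: "finite C" using cardC assms(1) card.infinite by force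
  define tc where "tc = treat_choices C KT"
  have tc_eq: "tc = {T. T \<subseteq> C \<and> card T = KT}" unfolding tc_def treat_choices_def by simp
  have fintc: "finite tc" unfolding tc_eq using finC by simp
  have cardtc: "real (card tc) = n0 K KT" unfolding tc_eq n0_def using n_subsets[OF finC] cardC by simp
  have n0pos: "n0 K KT > 0" unfolding n0_def using assms by simp
  have cnt1: "real (card (tc \<inter> {T. c \<in> T})) = c1 K KT" if "c \<in> C" for c
  proof -
    have "tc \<inter> {T. c \<in> T} = {T. T \<subseteq> C \<and> card T = KT \<and> c \<in> T}" unfolding tc_eq by auto
    then show ?thesis using count_with[OF finC that, of KT] assms cardC finC that
      unfolding c1_def by simp
  qed
  have cnt2: "real (card (tc \<inter> {T. c \<in> T \<and> d \<in> T})) = c12 K KT" if "c \<in> C" "d \<in> C" "c \<noteq> d" for c d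
  proof -
    have split: "tc \<inter> {T. c \<in> T} = (tc \<inter> {T. c \<in> T \<and> d \<in> T}) \<union> {T. T \<subseteq> C - {d} \<and> card T = KT \<and> c \<in> T}"
      unfolding tc_eq by auto
    have "card {T. T \<subseteq> C - {d} \<and> card T = KT \<and> c \<in> T} = (K - 2) choose (KT - 1)"
      using count_with[of "C - {d}" c KT] assms cardC finC that by (simp add: card_Diff_subset numeral_2_eq_2)
    moreover have "card (tc \<inter> {T. c \<in> T}) = card (tc \<inter> {T. c \<in> T \<and> d \<in> T}) + card {T. T \<subseteq> C - {d} \<and> card T = KT \<and> c \<in> T}"
      unfolding split by (rule card_Un_disjoint) (use fintc finC in auto)
    ultimately show ?thesis using cnt1[OF that(1)] unfolding c12_def by simp
  qed
  define cl where "cl = cluster_of C"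
  define A where "A = Amat N M w"
  define \<mu> where "\<mu> = 2 * c1 K KT / n0 K KT - 1"
  have aT: "assignment T i = 2 * of_bool (cl i \<in> T) - 1" if "T \<in> tc" "i < N" for T i
    unfolding cl_def by (rule assign_eq[OF P that(2)]) (use that in \<open>auto simp: tc_eq\<close>)
  have DE: "design_expect C KT f = (\<Sum>T\<in>tc. f (assignment T)) / n0 K KT" for f
    unfolding design_expect_def tc_def[symmetric] cardtc ..
  have mean: "design_expect C KT (\<lambda>Z. Z i) = \<mu>" if "i < N" for i
  proof -
    have "(\<Sum>T\<in>tc. assignment T i) = (\<Sum>T\<in>tc. 2 * of_bool (cl i \<in> T) - 1)"
      using aT that by (intro sum.cong) auto
    also have "\<dots> = 2 * c1 K KT - n0 K KT"
      using cnt1[of "cl i"] cl_props(1)[OF P that] fintc cardtc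
      by (simp add: sum_subtractf flip: sum_distrib_left cl_def)
    finally show ?thesis unfolding DE \<mu>_def using n0pos by (simp add: field_simps)
  qed
  have emean: "design_expect C KT (\<lambda>Z. exposure N M w Z i) = (\<Sum>j<N. A i j * \<mu>)" for i
  proof -
    have "(\<Sum>T\<in>tc. exposure N M w (assignment T) i) / n0 K KT
       = (\<Sum>j<N. A i j * ((\<Sum>T\<in>tc. assignment T j) / n0 K KT))"
      unfolding exposure_lin A_def
      by (subst sum.swap) (simp add: sum_divide_distrib sum_distrib_left)
    also have "\<dots> = (\<Sum>j<N. A i j * \<mu>)"
      using mean unfolding DE by (intro sum.cong) auto
    finally show ?thesis unfolding DE .
  qed
  define cov where "cov i j = (\<Sum>T\<in>tc. (assignment T i - \<mu>) * (assignment T j - \<mu>)) / n0 K KT" for i j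
  have trm: "design_expect C KT (\<lambda>Z. (Z i - design_expect C KT (\<lambda>Z'. Z' i)) *
        (exposure N M w Z i - design_expect C KT (\<lambda>Z'. exposure N M w Z' i)))
      = (\<Sum>j<N. A i j * cov i j)" if "i < N" for i
  proof -
    have "\<And>Z. exposure N M w Z i - (\<Sum>j<N. A i j * \<mu>) = (\<Sum>j<N. A i j * (Z j - \<mu>))"
      unfolding exposure_lin A_def by (simp add: sum_subtractf right_diff_distrib)
    then have "design_expect C KT (\<lambda>Z. (Z i - design_expect C KT (\<lambda>Z'. Z' i)) *
        (exposure N M w Z i - design_expect C KT (\<lambda>Z'. exposure N M w Z' i)))
      = (\<Sum>T\<in>tc. \<Sum>j<N. A i j * ((assignment T i - \<mu>) * (assignment T j - \<mu>))) / n0 K KT"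
      unfolding mean[OF that] emean DE by (simp add: sum_distrib_left mult_ac)
    also have "\<dots> = (\<Sum>j<N. A i j * cov i j)"
      unfolding cov_def by (subst sum.swap) (simp add: sum_divide_distrib sum_distrib_left)
    finally show ?thesis .
  qed
  have covv: "cov i j = (if cl j = cl i then alphaK K KT else betaK K KT)" if "i < N" "j < N" for i j
  proof -
    have "cov i j = (\<Sum>T\<in>tc. (2 * of_bool (cl i \<in> T) - 1 - \<mu>) * (2 * of_bool (cl j \<in> T) - 1 - \<mu>)) / n0 K KT"
      unfolding cov_def using aT that by (intro arg_cong2[where f="(/)"] sum.cong) auto
    also have "\<dots> = 4 * (real (card (tc \<inter> {T. cl i \<in> T \<and> cl j \<in> T})) / n0 K KT - (c1 K KT / n0 K KT)^2)
         + 4 * (c1 K KT / n0 K KT)^2 * (real (card tc) / n0 K KT - 1)"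
      by (rule cov_gen) (use fintc n0pos cnt1 cl_props(1)[OF P that(1), folded cl_def] cl_props(1)[OF P that(2), folded cl_def] \<mu>_def in auto)
    also have "\<dots> = (if cl j = cl i then alphaK K KT else betaK K KT)"
      using cardtc n0pos cnt1[OF cl_props(1)[OF P that(1)]] cnt2[OF cl_props(1)[OF P that(1)] cl_props(1)[OF P that(2)]]
      unfolding alphaK_def betaK_def cl_def by auto
    finally show ?thesis .
  qed
  have diffset: "{..<N} - cluster_of C i = {j \<in> {..<N}. cl j \<noteq> cl i}" if "i < N" for i
    using cl_props[OF P] cl_uniq[OF P] that unfolding cl_def by blast
  have H: "H_crit N M w C = (\<Sum>i<N. \<Sum>j<N. if cl j \<noteq> cl i then A i j else 0)"
  proof -
    have "H_crit N M w C = (\<Sum>i<N. \<Sum>j\<in>{j \<in> {..<N}. cl j \<noteq> cl i}. A i j)"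
      unfolding H_crit_def A_def Amat_def by (rule sum.cong[OF refl]) (simp add: diffset)
    also have "\<dots> = (\<Sum>i<N. \<Sum>j<N. if cl j \<noteq> cl i then A i j else 0)"
      by (rule sum.cong[OF refl]) (rule sum.inter_filter, simp)
    finally show ?thesis .
  qed
  have "trace_cov N M w KT C = (\<Sum>i<N. \<Sum>j<N. A i j * (if cl j = cl i then alphaK K KT else betaK K KT))"
    unfolding trace_cov_def using trm covv by (intro sum.cong refl) auto
  also have "\<dots> = (\<Sum>i<N. alphaK K KT * (\<Sum>j<N. A i j) - (alphaK K KT - betaK K KT) * (\<Sum>j<N. if cl j \<noteq> cl i then A i j else 0))"
  proof (intro sum.cong refl)
    fix i
    have "(\<Sum>j<N. A i j * (if cl j = cl i then alphaK K KT else betaK K KT))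
      = (\<Sum>j<N. alphaK K KT * A i j - (alphaK K KT - betaK K KT) * (if cl j \<noteq> cl i then A i j else 0))"
      by (intro sum.cong refl) (auto simp: algebra_simps)
    also have "\<dots> = alphaK K KT * (\<Sum>j<N. A i j) - (alphaK K KT - betaK K KT) * (\<Sum>j<N. if cl j \<noteq> cl i then A i j else 0)"
      by (simp only: sum_subtractf sum_distrib_left)
    finally show "(\<Sum>j<N. A i j * (if cl j = cl i then alphaK K KT else betaK K KT)) = alphaK K KT * (\<Sum>j<N. A i j) - (alphaK K KT - betaK K KT) * (\<Sum>j<N. if cl j \<noteq> cl i then A i j else 0)" .
  qed
  also have "\<dots> = alphaK K KT * real N - (alphaK K KT - betaK K KT) * H_crit N M w C"
  proof -
    have "(\<Sum>i<N. alphaK K KT * (\<Sum>j<N. A i j) - (alphaK K KT - betaK K KT) * (\<Sum>j<N. if cl j \<noteq> cl i then A i j else 0))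
      = (\<Sum>i<N. alphaK K KT - (alphaK K KT - betaK K KT) * (\<Sum>j<N. if cl j \<noteq> cl i then A i j else 0))"
      using row_sum[OF _ W V] unfolding A_def by (intro sum.cong refl) auto
    also have "\<dots> = alphaK K KT * real N - (alphaK K KT - betaK K KT) * H_crit N M w C"
      unfolding H by (simp only: sum_subtractf sum_distrib_left[symmetric]) simp
    finally show ?thesis .
  qed
  finally show ?thesis .
qed


theorem lemma2:
  fixes N M K KT :: nat and w :: "nat \<Rightarrow> nat \<Rightarrow> real"
  assumes "K \<ge> 2" and "K dvd N"
    and "0 < KT" and "KT < K"
    and "\<And>i s. i < N \<Longrightarrow> s < M \<Longrightarrow> w i s \<ge> 0"
    and "\<And>i. i < N \<Longrightarrow> (\<Sum>s<M. w i s) > 0"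
    and "\<And>s. s < M \<Longrightarrow> (\<Sum>i<N. w i s) > 0"
  shows "{C \<in> balanced_partitions N K. \<forall>C' \<in> balanced_partitions N K.
            trace_cov N M w KT C' \<le> trace_cov N M w KT C}
       = {C \<in> balanced_partitions N K. \<forall>C' \<in> balanced_partitions N K.
            H_crit N M w C \<le> H_crit N M w C'}"
proof -
  have tf: "trace_cov N M w KT C = alphaK K KT * real N - (alphaK K KT - betaK K KT) * H_crit N M w C"
    if "C \<in> balanced_partitions N K" for C
    by (rule trace_formula[OF assms(1,3,4,6,7) that])
  have d: "alphaK K KT - betaK K KT > 0" using alpha_gt_beta[OF assms(3,4)] by simp
  have iff: "trace_cov N M w KT C' \<le> trace_cov N M w KT C \<longleftrightarrow> H_crit N M w C \<le> H_crit N M w C'"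
    if "C \<in> balanced_partitions N K" "C' \<in> balanced_partitions N K" for C C'
    unfolding tf[OF that(1)] tf[OF that(2)] using d by simp
  show ?thesis using iff by blast
qed

end
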